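(* Let $X\subset Y$ be cubical sets in $\mathbb{R}^d$. Assume there exists a cubical set $Z=\bigcup_{i=1}^m Q_i$, where each $Q_i$ is an elementary cube with $\dim Q_i=d$, such that $Y\setminus X\subset Z$. Then $$\#Y-\#X\le 3^d|Z|,$$ where $|Z|$ is the Lebesgue measure of $Z$.
   Context: An elementary interval is $[l,l+1]$ or $[l]=[l,l]$ with $l\in\mathbb{Z}$; an elementary cube in $\mathbb{R}^d$ is a product of $d$ elementary intervals, and its dimension is the number of nondegenerate factors. A cubical set is a union of elementary cubes. For a cubical set $X$, $\#X$ denotes the number of elementary cubes (of all dimensions) contained in $X$. *)

theory Defs
  imports "HOL-Analysis.Analysis"
begin

text \<open>Points of R^d are vectors of type real^'n, with d = CARD('n).\<close>

definition elem_cube_of :: "('n::finite \<Rightarrow> int) \<Rightarrow> ('n \<Rightarrow> bool) \<Rightarrow> (real^'n) set" where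
  "elem_cube_of l nd = {x. \<forall>i. of_int (l i) \<le> x$i \<and> x$i \<le> of_int (l i) + (if nd i then 1 else 0)}"

definition elementary_cube :: "(real^'n::finite) set \<Rightarrow> bool" where
  "elementary_cube Q \<longleftrightarrow> (\<exists>l nd. Q = elem_cube_of l nd)"

text \<open>Dimension: number of nondegenerate factors (well-defined, since the set
determines the factors).\<close>
definition cube_dim :: "(real^'n::finite) set \<Rightarrow> nat" where
  "cube_dim Q = (THE k. \<exists>l nd. Q = elem_cube_of l nd \<and> k = card {i. nd i})"

definition cubical_set :: "(real^'n::finite) set \<Rightarrow> bool" where
  "cubical_set X \<longleftrightarrow> (\<exists>F. finite F \<and> (\<forall>Q\<in>F. elementary_cube Q) \<and> X = \<Union>F)"

definition num_cubes :: "(real^'n::finite) set \<Rightarrow> nat" where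
  "num_cubes X = card {Q. elementary_cube Q \<and> Q \<subseteq> X}"

end

theory Submission
  imports Defs
begin

lemma elem_cube_cbox: "elem_cube_of l nd = cbox (\<chi> i. of_int (l i)) (\<chi> i. of_int (l i) + (if nd i then 1 else 0))"
  unfolding elem_cube_of_def by (rule set_eqI) (simp add: mem_box_cart)

lemma elem_cube_inj:
  assumes "elem_cube_of l nd = elem_cube_of l' nd'"
  shows "l = l' \<and> nd = nd'"
proof -
  have A: "l' i \<le> l i \<and> (nd i \<longrightarrow> nd' i)" if "elem_cube_of l nd = elem_cube_of l' nd'" for l nd l' nd' i
  proof -
    have "(\<chi> i. of_int (l i)) \<in> elem_cube_of l nd" by (auto simp: elem_cube_of_def)
    then have "(\<chi> i. of_int (l i)) \<in> elem_cube_of l' nd'" using that by simp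
    then have h1: "real_of_int (l' i) \<le> of_int (l i)" by (auto simp: elem_cube_of_def)
    have "(\<chi> i. of_int (l i) + (if nd i then 1 else 0)) \<in> elem_cube_of l nd" by (auto simp: elem_cube_of_def)
    then have "(\<chi> i. of_int (l i) + (if nd i then 1 else (0::real))) \<in> elem_cube_of l' nd'" using that by simp
    then have h2: "of_int (l i) + (if nd i then 1 else (0::real)) \<le> of_int (l' i) + (if nd' i then 1 else 0)"
      by (auto simp: elem_cube_of_def)
    from h1 have "l' i \<le> l i" by simp
    moreover have "nd i \<longrightarrow> nd' i"
    proof
      assume "nd i"
      show "nd' i"
      proof (rule ccontr)
        assume "\<not> nd' i"
        with h2 \<open>nd i\<close> h1 show False by auto
      qed
    qed
    ultimately show ?thesis by simp
  qed
  have "\<forall>i. l' i \<le> l i \<and> (nd i \<longrightarrow> nd' i)" using A[OF assms] by blast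
  moreover have "\<forall>i. l i \<le> l' i \<and> (nd' i \<longrightarrow> nd i)" using A[OF assms[symmetric]] by blast
  ultimately show ?thesis by (auto intro!: ext antisym)
qed

lemma cube_dim_eq: "cube_dim (elem_cube_of l nd) = card {i. nd i}"
  unfolding cube_dim_def
proof (rule the_equality)
  show "\<exists>l' nd'. elem_cube_of l nd = elem_cube_of l' nd' \<and> card {i. nd i} = card {i. nd' i}" by blast
  fix k assume "\<exists>l' nd'. elem_cube_of l nd = elem_cube_of l' nd' \<and> k = card {i. nd' i}"
  then show "k = card {i. nd i}" using elem_cube_inj by metis
qed

lemma full_dim:
  assumes "cube_dim (elem_cube_of l nd) = CARD('n::finite)"
  shows "nd = (\<lambda>_::'n. True)"
proof -
  have "card {i. nd i} = card (UNIV::'n set)" using assms cube_dim_eq by metis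
  then have "{i. nd i} = UNIV" by (metis card_subset_eq finite subset_UNIV)
  then show ?thesis by auto
qed

lemma closed_cubical: "cubical_set X \<Longrightarrow> closed X"
  unfolding cubical_set_def elementary_cube_def
  by (auto simp: elem_cube_cbox intro!: closed_Union)

lemma measure_box1: "measure lebesgue (box (\<chi> i. real_of_int (k i)) (\<chi> i. real_of_int (k i) + 1) :: (real^'n::finite) set) = 1"
proof -
  let ?l = "(\<chi> i. real_of_int (k i)) :: real^'n" and ?u = "(\<chi> i. real_of_int (k i) + 1) :: real^'n"
  have d: "?u - ?l = ((\<chi> i. 1)::real^'n)" by (simp add: vec_eq_iff)
  have b: "((\<chi> i. 1) :: real^'n) \<bullet> b = 1" if "b \<in> (Basis :: (real^'n) set)" for b
    using that by (auto simp: Basis_vec_def inner_axis)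
  have le: "?l \<bullet> b \<le> ?u \<bullet> b" if "b \<in> (Basis :: (real^'n) set)" for b
  proof -
    have "(?u - ?l) \<bullet> b = 1" using b[OF that] d by simp
    then show ?thesis by (simp add: inner_diff_left)
  qed
  have "measure lborel (box ?l ?u) = prod ((\<bullet>) (?u - ?l)) Basis"
    by (rule measure_lborel_box) (rule le)
  also have "\<dots> = 1" unfolding d by (rule prod.neutral) (simp add: b)
  finally show ?thesis by (simp add: measure_completion)
qed
lemma relint:
  fixes p :: "real^'n::finite"
  assumes p: "p \<in> elem_cube_of l nd" and e: "e > 0"
  shows "\<exists>q \<in> elem_cube_of l nd. dist q p < e \<and> (\<forall>i. nd i \<longrightarrow> of_int(l i) < q$i \<and> q$i < of_int(l i)+1)"
proof -
  define c :: "real^'n" where "c = (\<chi> i. of_int (l i) + (if nd i then 1/2 else 0))"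
  define N where "N = norm (c - p)"
  define t where "t = e / (N + e)"
  have N0: "N \<ge> 0" unfolding N_def by simp
  have t0: "0 < t" using e N0 unfolding t_def by simp
  have t1: "t \<le> 1" using e N0 unfolding t_def by simp
  have tN: "t * N < e"
  proof -
    have "t * N = e * N / (N + e)" unfolding t_def by simp
    also have "\<dots> < e" using e N0 by (simp add: divide_less_eq algebra_simps)
    finally show ?thesis .
  qed
  define q where "q = p + t *\<^sub>R (c - p)"
  have qi: "q$i = p$i + t * (c$i - p$i)" for i unfolding q_def by simp
  have pi: "of_int (l i) \<le> p$i \<and> p$i \<le> of_int (l i) + (if nd i then 1 else 0)" for i
    using p by (auto simp: elem_cube_of_def)
  have dq: "dist q p < e"
    using tN t0 by (simp add: q_def dist_norm N_def)
  have strict: "of_int(l i) < q$i \<and> q$i < of_int(l i)+1" if "nd i" for i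
  proof -
    have ci: "c$i = of_int (l i) + 1/2" using that by (simp add: c_def)
    have a: "q$i - of_int (l i) = (1 - t) * (p$i - of_int (l i)) + t / 2"
      unfolding qi ci by (simp add: algebra_simps)
    have b: "of_int (l i) + 1 - q$i = (1 - t) * (of_int (l i) + 1 - p$i) + t / 2"
      unfolding qi ci by (simp add: algebra_simps)
    have "(1 - t) * (p$i - of_int (l i)) \<ge> 0" using pi[of i] t1 by simp
    moreover have "(1 - t) * (of_int (l i) + 1 - p$i) \<ge> 0" using pi[of i] t1 that by simp
    ultimately show ?thesis using a b t0 by linarith
  qed
  have "q \<in> elem_cube_of l nd"
  proof -
    have "of_int (l i) \<le> q$i \<and> q$i \<le> of_int (l i) + (if nd i then 1 else 0)" for i
    proof (cases "nd i")
      case True then show ?thesis using strict[of i] by simp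
    next
      case False
      then have "p$i = of_int (l i)" "c$i = of_int (l i)" using pi[of i] by (auto simp: c_def)
      then show ?thesis using False by (simp add: qi)
    qed
    then show ?thesis by (simp add: elem_cube_of_def)
  qed
  then show ?thesis using dq strict by blast
qed

definition faces :: "('n::finite \<Rightarrow> int) \<Rightarrow> (real^'n) set set" where
  "faces k = {elem_cube_of l nd | l nd. \<forall>i. (nd i \<and> l i = k i) \<or> (\<not> nd i \<and> (l i = k i \<or> l i = k i + 1))}"

lemma in_faces:
  assumes "q \<in> elem_cube_of k (\<lambda>_. True)" "\<forall>i. nd i \<longrightarrow> of_int(l i) < q$i \<and> q$i < of_int(l i)+1"
    "q \<in> elem_cube_of l nd"
  shows "elem_cube_of l nd \<in> faces k"
proof -
  have "(nd i \<and> l i = k i) \<or> (\<not> nd i \<and> (l i = k i \<or> l i = k i + 1))" for i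
  proof -
    have k: "of_int (k i) \<le> q$i" "q$i \<le> of_int (k i) + 1" using assms(1) by (auto simp: elem_cube_of_def)
    have l: "of_int (l i) \<le> q$i" "q$i \<le> of_int (l i) + (if nd i then 1 else 0)" using assms(3) by (auto simp: elem_cube_of_def)
    show ?thesis
    proof (cases "nd i")
      case True
      then have s: "of_int(l i) < q$i" "q$i < of_int(l i)+1" using assms(2) by auto
      have "real_of_int (l i) < of_int (k i + 1)" using s k by simp
      then have "l i < k i + 1" by linarith
      moreover have "real_of_int (k i) < of_int (l i + 1)" using s k by simp
      then have "k i < l i + 1" by linarith
      ultimately show ?thesis using True by simp
    next
      case False
      then have "q$i = of_int (l i)" using l by simp
      then have "real_of_int (k i) \<le> of_int (l i)" "real_of_int (l i) \<le> of_int (k i + 1)" using k by auto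
      then have "k i \<le> l i" "l i \<le> k i + 1" by linarith+
      then show ?thesis using False by auto
    qed
  qed
  then show ?thesis unfolding faces_def by blast
qed

lemma card_faces: "card (faces (k::'n::finite \<Rightarrow> int)) \<le> 3 ^ CARD('n)"
proof -
  define g where "g = (\<lambda>f::'n \<Rightarrow> nat. elem_cube_of (\<lambda>i. k i + (if f i = 2 then 1 else 0)) (\<lambda>i. f i = 0))"
  have sub: "faces k \<subseteq> g ` (PiE UNIV (\<lambda>_. {0,1,2}))"
  proof
    fix Q assume "Q \<in> faces k"
    then obtain l nd where Q: "Q = elem_cube_of l nd"
      and h: "\<forall>i. (nd i \<and> l i = k i) \<or> (\<not> nd i \<and> (l i = k i \<or> l i = k i + 1))"
      unfolding faces_def by blast
    define f where "f = (\<lambda>i. if nd i then 0 else if l i = k i then 1 else (2::nat))"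
    have "\<forall>i. f i \<in> {0,1,2}" by (simp add: f_def)
    then have "f \<in> PiE UNIV (\<lambda>_. {0,1,2})" by (simp add: PiE_iff)
    have fl: "(\<lambda>i. k i + (if f i = 2 then 1 else 0)) = l"
    proof
      fix i show "k i + (if f i = 2 then 1 else 0) = l i" using h[rule_format, of i] by (auto simp: f_def)
    qed
    have fn: "(\<lambda>i. f i = 0) = nd"
    proof
      fix i show "(f i = 0) = nd i" by (simp add: f_def)
    qed
    have "g f = Q" unfolding g_def Q fl fn ..
    then show "Q \<in> g ` (PiE UNIV (\<lambda>_. {0,1,2}))" using \<open>f \<in> PiE UNIV (\<lambda>_. {0,1,2})\<close> by blast
  qed
  have "card (faces k) \<le> card (g ` (PiE UNIV (\<lambda>_. {0,1,2::nat})))"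
    by (rule card_mono[OF _ sub]) (auto intro!: finite_PiE)
  also have "\<dots> \<le> card (PiE (UNIV::'n set) (\<lambda>_. {0,1,2::nat}))" by (rule card_image_le) (auto intro!: finite_PiE)
  also have "\<dots> = 3 ^ CARD('n)" by (simp add: card_PiE numeral_eq_Suc)
  finally show ?thesis .
qed

lemma finite_faces: "finite (faces (k::'n::finite \<Rightarrow> int))"
proof -
  have "faces k \<subseteq> (\<lambda>(l,nd). elem_cube_of l nd) ` ((PiE UNIV (\<lambda>i. {k i, k i + 1})) \<times> UNIV)"
    unfolding faces_def by (force)
  moreover have "finite ((PiE (UNIV::'n set) (\<lambda>i. {k i, k i + 1})) \<times> (UNIV :: ('n \<Rightarrow> bool) set))"
    by (auto intro!: finite_PiE)
  ultimately show ?thesis by (meson finite_imageI finite_subset)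
qed

theorem lemma3p2:
  fixes X Y :: "(real^'n::finite) set" and Qs :: "nat \<Rightarrow> (real^'n) set" and m :: nat
  assumes "cubical_set X" and "cubical_set Y" and "X \<subseteq> Y"
    and "\<forall>i\<in>{1..m}. elementary_cube (Qs i) \<and> cube_dim (Qs i) = CARD('n)"
    and "Y - X \<subseteq> (\<Union>i\<in>{1..m}. Qs i)"
  shows "real (num_cubes Y) - real (num_cubes X)
           \<le> 3 ^ CARD('n) * measure lebesgue (\<Union>i\<in>{1..m}. Qs i)"
proof -
  have "\<forall>i\<in>{1..m}. \<exists>k. Qs i = elem_cube_of k (\<lambda>_. True)"
  proof
    fix i assume i: "i \<in> {1..m}"
    then obtain l nd where Q: "Qs i = elem_cube_of l nd" using assms(4) unfolding elementary_cube_def by blast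
    then have "nd = (\<lambda>_. True)" using full_dim assms(4) i by metis
    then show "\<exists>k. Qs i = elem_cube_of k (\<lambda>_. True)" using Q by blast
  qed
  then obtain kf where kf: "\<forall>i\<in>{1..m}. Qs i = elem_cube_of (kf i) (\<lambda>_. True)" by metis
  define K where "K = kf ` {1..m}"
  have finK: "finite K" unfolding K_def by simp
  have Z: "(\<Union>i\<in>{1..m}. Qs i) = (\<Union>k\<in>K. elem_cube_of k (\<lambda>_. True))"
    unfolding K_def using kf by auto
  define F where "F = {Q. elementary_cube Q \<and> Q \<subseteq> Y}"
  define G where "G = {Q. elementary_cube Q \<and> Q \<subseteq> X}"
  have GF: "G \<subseteq> F" using assms(3) unfolding F_def G_def by auto
  have clX: "closed X" using closed_cubical assms(1) .
  have DK: "F - G \<subseteq> (\<Union>k\<in>K. faces k)"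
  proof
    fix Q assume "Q \<in> F - G"
    then obtain l nd where Q: "Q = elem_cube_of l nd" and QY: "Q \<subseteq> Y" and QX: "\<not> Q \<subseteq> X"
      unfolding F_def G_def elementary_cube_def by blast
    then obtain p where p: "p \<in> Q" "p \<notin> X" by blast
    have "open (- X)" using clX by auto
    then obtain e where e: "e > 0" "ball p e \<subseteq> - X" using p(2) open_contains_ball by blast
    obtain q where q: "q \<in> Q" "dist q p < e" "\<forall>i. nd i \<longrightarrow> of_int(l i) < q$i \<and> q$i < of_int(l i)+1"
      using relint[OF p(1)[unfolded Q] e(1)] Q by blast
    have "q \<notin> X" using q(2) e(2) by (auto simp: dist_commute)
    then have "q \<in> Y - X" using q(1) QY by blast
    then have "q \<in> (\<Union>k\<in>K. elem_cube_of k (\<lambda>_. True))" using assms(5) Z by blast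
    then obtain k where k: "k \<in> K" "q \<in> elem_cube_of k (\<lambda>_. True)" by blast
    have "Q \<in> faces k" using in_faces[OF k(2) q(3)] q(1) Q by blast
    then show "Q \<in> (\<Union>k\<in>K. faces k)" using k(1) by blast
  qed
  have cardD: "card (F - G) \<le> card K * 3 ^ CARD('n)"
  proof -
    have "card (F - G) \<le> card (\<Union>k\<in>K. faces k)"
      by (rule card_mono[OF _ DK]) (simp add: finK finite_faces)
    also have "\<dots> \<le> (\<Sum>k\<in>K. card (faces k))" by (rule card_UN_le[OF finK])
    also have "\<dots> \<le> (\<Sum>k\<in>K. 3 ^ CARD('n))" by (rule sum_mono) (rule card_faces)
    also have "\<dots> = card K * 3 ^ CARD('n)" by simp
    finally show ?thesis .
  qed
  define ob :: "('n \<Rightarrow> int) \<Rightarrow> (real^'n) set" where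
    "ob k = box (\<chi> i. real_of_int (k i)) (\<chi> i. real_of_int (k i) + 1)" for k
  have obsub: "ob k \<subseteq> elem_cube_of k (\<lambda>_. True)" for k
    unfolding ob_def elem_cube_cbox by (auto simp: mem_box_cart less_imp_le)
  have disj: "ob k \<inter> ob k' = {}" if "k \<noteq> k'" for k k'
  proof (rule ccontr)
    assume "ob k \<inter> ob k' \<noteq> {}"
    then obtain x where x: "x \<in> ob k" "x \<in> ob k'" by blast
    have "k i = k' i" for i
    proof -
      have a: "real_of_int (k i) < x$i" "x$i < real_of_int (k i) + 1"
           "real_of_int (k' i) < x$i" "x$i < real_of_int (k' i) + 1"
        using x by (auto simp: ob_def mem_box_cart)
      have "real_of_int (k i) < of_int (k' i + 1)" "real_of_int (k' i) < of_int (k i + 1)" using a by auto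
      then have "k i < k' i + 1" "k' i < k i + 1" by linarith+
      then show ?thesis by simp
    qed
    then show False using that by auto
  qed
  have meas_ob: "measure lebesgue (\<Union>k\<in>K. ob k) = real (card K)"
  proof -
    have pw: "pairwise (\<lambda>x y. negligible (ob x \<inter> ob y)) K"
      using disj by (auto simp: pairwise_def)
    have "measure lebesgue (\<Union>k\<in>K. ob k) = (\<Sum>k\<in>K. measure lebesgue (ob k))"
      by (rule measure_negligible_finite_Union_image[OF finK _ pw]) (simp add: ob_def)
    also have "\<dots> = real (card K)" by (simp add: ob_def measure_box1)
    finally show ?thesis .
  qed
  have compZ: "compact (\<Union>k\<in>K. elem_cube_of k (\<lambda>_. True))"
    using finK by (auto simp: elem_cube_cbox intro!: compact_UN)
  have measK: "real (card K) \<le> measure lebesgue (\<Union>i\<in>{1..m}. Qs i)"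
  proof -
    have "measure lebesgue (\<Union>k\<in>K. ob k) \<le> measure lebesgue (\<Union>k\<in>K. elem_cube_of k (\<lambda>_. True))"
      by (rule measure_mono_fmeasurable) (use obsub lmeasurable_compact[OF compZ] finK in \<open>auto simp: ob_def\<close>)
    then show ?thesis using meas_ob Z by simp
  qed
  have numdiff: "real (num_cubes Y) - real (num_cubes X) \<le> real (card (F - G))"
  proof (cases "finite F")
    case True
    then have "card F = card G + card (F - G)"
      using GF by (metis card_Diff_subset finite_subset le_add_diff_inverse card_mono)
    then show ?thesis unfolding num_cubes_def F_def[symmetric] G_def[symmetric] by simp
  next
    case False
    then show ?thesis unfolding num_cubes_def F_def[symmetric] G_def[symmetric] by simp
  qed
  have "real (card (F - G)) \<le> real (card K * 3 ^ CARD('n))"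
    using cardD of_nat_le_iff by blast
  also have "\<dots> = real (card K) * 3 ^ CARD('n)" by simp
  also have "\<dots> \<le> 3 ^ CARD('n) * measure lebesgue (\<Union>i\<in>{1..m}. Qs i)"
    using measK by (simp add: mult.commute)
  finally show ?thesis using numdiff by linarith
qed

end
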